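(* For every finite set $\Gamma$, the assignment $X\mapsto TX$ (tape maps) is closed under the unit and Kleisli extension of the store monad with store $S=\mathbb Z\times\Gamma^{\mathbb Z}$: for every set $X$ and $x\in X$, $\eta(x)\in TX$; and for every $p\in TX$ and every map $f:X\to TY$, $f^\dagger(p)\in TY$. Hence the tape monad is a well-defined submonad of the store monad.
   Context: Store monad over $S$: $X\mapsto(X\times S)^S$ with $\eta(x)(s)=(x,s)$ and, for $p=\langle r,z,t\rangle$ (writing $s=(i,\sigma)$) and $f:X\to(Y\times S)^S$, $f^\dagger(p)(i,\sigma)=f(r(i,\sigma))(z(i,\sigma),t(i,\sigma))$. Notation: $\sigma=_{i\pm k}\sigma'$ iff $\sigma(j)=\sigma'(j)$ whenever $|i-j|\le k$; $\sigma=^{i\pm k}\sigma'$ iff $\sigma(j)=\sigma'(j)$ whenever $|i-j|>k$; $\sigma_{+j}=\sigma\circ(\lambda i.i+j)$. $TX$ is the set of $\langle r,z,t\rangle:\mathbb Z\times\Gamma^{\mathbb Z}\to X\times\mathbb Z\times\Gamma^{\mathbb Z}$ for which there is $k\ge0$ such that for all $i,j\in\mathbb Z$ and all $\sigma,\sigma'$ with $\sigma=_{i\pm k}\sigma'$: $t(i,\sigma)=_{i\pm k}t(i,\sigma')$, $r(i,\sigma)=r(i,\sigma')$, $|z(i,\sigma)-i|\le k$, $t(i,\sigma)=^{i\pm k}\sigma$, $z(i,\sigma)=z(i,\sigma')$, $t(i,\sigma_{+j})=t(i+j,\sigma)_{+j}$, $r(i,\sigma_{+j})=r(i+j,\sigma)$,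 $z(i,\sigma_{+j})=z(i+j,\sigma)-j$. *)

theory Defs
  imports Main
begin

definition st_eta :: "'x \<Rightarrow> ('s \<Rightarrow> 'x \<times> 's)" where
  "st_eta x = (\<lambda>s. (x, s))"

definition st_ext :: "('x \<Rightarrow> ('s \<Rightarrow> 'y \<times> 's)) \<Rightarrow> ('s \<Rightarrow> 'x \<times> 's) \<Rightarrow> ('s \<Rightarrow> 'y \<times> 's)" where
  "st_ext f p = (\<lambda>s. f (fst (p s)) (snd (p s)))"

type_synonym 'g store = "int \<times> (int \<Rightarrow> 'g)"

definition eq_near :: "int \<Rightarrow> nat \<Rightarrow> (int \<Rightarrow> 'g) \<Rightarrow> (int \<Rightarrow> 'g) \<Rightarrow> bool" where
  "eq_near i k \<sigma> \<sigma>' \<longleftrightarrow> (\<forall>j. \<bar>i - j\<bar> \<le> int k \<longrightarrow> \<sigma> j = \<sigma>' j)"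

definition eq_far :: "int \<Rightarrow> nat \<Rightarrow> (int \<Rightarrow> 'g) \<Rightarrow> (int \<Rightarrow> 'g) \<Rightarrow> bool" where
  "eq_far i k \<sigma> \<sigma>' \<longleftrightarrow> (\<forall>j. \<bar>i - j\<bar> > int k \<longrightarrow> \<sigma> j = \<sigma>' j)"

definition shift :: "(int \<Rightarrow> 'g) \<Rightarrow> int \<Rightarrow> (int \<Rightarrow> 'g)" where
  "shift \<sigma> j = \<sigma> \<circ> (\<lambda>i. i + j)"

definition tape_maps :: "('g store \<Rightarrow> 'x \<times> 'g store) set" where
  "tape_maps = {p. \<exists>k::nat. \<forall>i j \<sigma> \<sigma>'.
     let r = (\<lambda>i \<sigma>. fst (p (i, \<sigma>)));
         z = (\<lambda>i \<sigma>. fst (snd (p (i, \<sigma>))));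
         t = (\<lambda>i \<sigma>. snd (snd (p (i, \<sigma>))))
     in (eq_near i k \<sigma> \<sigma>' \<longrightarrow>
           eq_near i k (t i \<sigma>) (t i \<sigma>') \<and>
           r i \<sigma> = r i \<sigma>' \<and>
           z i \<sigma> = z i \<sigma>') \<and>
        \<bar>z i \<sigma> - i\<bar> \<le> int k \<and>
        eq_far i k (t i \<sigma>) \<sigma> \<and>
        t i (shift \<sigma> j) = shift (t (i + j) \<sigma>) j \<and>
        r i (shift \<sigma> j) = r (i + j) \<sigma> \<and>
        z i (shift \<sigma> j) = z (i + j) \<sigma> - j}"

end

theory Submission
  imports Defs "HOL-Library.FuncSet"
begin

definition tp :: "('g store \<Rightarrow> 'x \<times> 'g store) \<Rightarrow> nat \<Rightarrow> bool" where
 "tp p k \<longleftrightarrow> (\<forall>i j \<sigma> \<sigma>'.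
     (eq_near i k \<sigma> \<sigma>' \<longrightarrow>
           eq_near i k (snd (snd (p (i, \<sigma>)))) (snd (snd (p (i, \<sigma>'))))  \<and>
           fst (p (i, \<sigma>)) = fst (p (i, \<sigma>')) \<and>
           fst (snd (p (i, \<sigma>))) = fst (snd (p (i, \<sigma>')))) \<and>
        \<bar>fst (snd (p (i, \<sigma>))) - i\<bar> \<le> int k \<and>
        eq_far i k (snd (snd (p (i, \<sigma>)))) \<sigma> \<and>
        snd (snd (p (i, shift \<sigma> j))) = shift (snd (snd (p (i + j, \<sigma>)))) j \<and>
        fst (p (i, shift \<sigma> j)) = fst (p (i + j, \<sigma>)) \<and>
        fst (snd (p (i, shift \<sigma> j))) = fst (snd (p (i + j, \<sigma>))) - j)"

lemma eq_nearD: "eq_near i k a b \<Longrightarrow> \<bar>i - j\<bar> \<le> int k \<Longrightarrow> a j = b j"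
  unfolding eq_near_def by simp

lemma eq_farD: "eq_far i k a b \<Longrightarrow> int k < \<bar>i - j\<bar> \<Longrightarrow> a j = b j"
  unfolding eq_far_def by simp

lemma tpD:
  assumes "tp p k"
  shows "eq_near i k \<sigma> \<sigma>' \<Longrightarrow> eq_near i k (snd (snd (p (i, \<sigma>)))) (snd (snd (p (i, \<sigma>'))))"
    and "eq_near i k \<sigma> \<sigma>' \<Longrightarrow> fst (p (i, \<sigma>)) = fst (p (i, \<sigma>'))"
    and "eq_near i k \<sigma> \<sigma>' \<Longrightarrow> fst (snd (p (i, \<sigma>))) = fst (snd (p (i, \<sigma>')))"
    and "\<bar>fst (snd (p (i, \<sigma>))) - i\<bar> \<le> int k"
    and "eq_far i k (snd (snd (p (i, \<sigma>)))) \<sigma>"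
    and "snd (snd (p (i, shift \<sigma> j))) = shift (snd (snd (p (i + j, \<sigma>)))) j"
    and "fst (p (i, shift \<sigma> j)) = fst (p (i + j, \<sigma>))"
    and "fst (snd (p (i, shift \<sigma> j))) = fst (snd (p (i + j, \<sigma>))) - j"
  using assms unfolding tp_def by blast+

lemma tm_iff: "p \<in> tape_maps \<longleftrightarrow> (\<exists>k. tp p k)"
  unfolding tape_maps_def tp_def Let_def by simp

lemma finite_r:
  fixes p :: "('g::finite) store \<Rightarrow> 'x \<times> 'g store"
  assumes "tp p k"
  shows "finite (range (\<lambda>\<sigma>. fst (p (0, \<sigma>))))"
proof -
  obtain c :: 'g where True by simp
  define A :: "int set" where "A = {-int k..int k}"
  define e where "e = (\<lambda>h::int\<Rightarrow>'g. \<lambda>j. if j \<in> A then h j else c)"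
  have fin: "finite (e ` (PiE A (\<lambda>_. UNIV :: 'g set)))"
    by (rule finite_imageI, rule finite_PiE) (auto simp: A_def)
  have "range (\<lambda>\<sigma>. fst (p (0, \<sigma>))) \<subseteq> (\<lambda>v. fst (p (0, v))) ` (e ` (PiE A (\<lambda>_. UNIV :: 'g set)))"
  proof
    fix y assume "y \<in> range (\<lambda>\<sigma>. fst (p (0, \<sigma>)))"
    then obtain \<sigma> where y: "y = fst (p (0, \<sigma>))" by auto
    have "eq_near 0 k \<sigma> (e (restrict \<sigma> A))"
      unfolding eq_near_def e_def A_def by auto
    hence "fst (p (0, \<sigma>)) = fst (p (0, e (restrict \<sigma> A)))"
      using tpD(2)[OF assms] by blast
    moreover have "restrict \<sigma> A \<in> PiE A (\<lambda>_. UNIV :: 'g set)" by simp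
    ultimately show "y \<in> (\<lambda>v. fst (p (0, v))) ` (e ` (PiE A (\<lambda>_. UNIV :: 'g set)))"
      using y by blast
  qed
  thus ?thesis using fin finite_subset by blast
qed

lemma eta_tp: "tp (st_eta x) 0"
  unfolding tp_def st_eta_def eq_near_def eq_far_def shift_def by auto

lemma ext_tp:
  fixes p :: "('g::finite) store \<Rightarrow> 'x \<times> 'g store"
    and f :: "'x \<Rightarrow> 'g store \<Rightarrow> 'y \<times> 'g store"
  assumes hp: "tp p k" and hf: "\<And>x. tp (f x) (kf x)"
  shows "\<exists>K. tp (st_ext f p) K"
proof -
  define R where "R = range (\<lambda>\<sigma>. fst (p (0, \<sigma>)))"
  have finR: "finite R" using finite_r[OF hp] by (simp add: R_def)
  define K where "K = Max (kf ` R)"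
  have rR: "fst (p (i, \<sigma>)) \<in> R" for i \<sigma>
  proof -
    have "fst (p (i, \<sigma>)) = fst (p (0, shift \<sigma> i))" using tpD(7)[OF hp, of 0 \<sigma> i] by simp
    thus ?thesis unfolding R_def by (rule ssubst) (rule rangeI)
  qed
  have kK: "kf (fst (p (i, \<sigma>))) \<le> K" for i \<sigma>
    unfolding K_def by (rule Max_ge[OF finite_imageI[OF finR] imageI[OF rR]])
  let ?r = "\<lambda>i \<sigma>. fst (p (i, \<sigma>))"
  let ?z = "\<lambda>i \<sigma>. fst (snd (p (i, \<sigma>)))"
  let ?t = "\<lambda>i \<sigma>. snd (snd (p (i, \<sigma>)))"
  have q2: "st_ext f p s = f (fst (p s)) (fst (snd (p s)), snd (snd (p s)))" for s
    unfolding st_ext_def by simp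
  have "tp (st_ext f p) (k + K)"
    unfolding tp_def q2
  proof (intro allI conjI impI)
    fix i j :: int and \<sigma> \<sigma>' :: "int \<Rightarrow> 'g"
    let ?x = "?r i \<sigma>"
    have P: "tp p k" by (rule hp)
    have F: "tp (f ?x) (kf ?x)" by (rule hf)
    have zi: "\<bar>?z i \<sigma> - i\<bar> \<le> int k" using P by (rule tpD)
    have tfar: "eq_far i k (?t i \<sigma>) \<sigma>" using P by (rule tpD)
    have kx: "kf ?x \<le> K" by (rule kK)
    have zf: "\<bar>fst (snd (f ?x (?z i \<sigma>, ?t i \<sigma>))) - ?z i \<sigma>\<bar> \<le> int (kf ?x)"
      using F by (rule tpD)
    have tffar: "eq_far (?z i \<sigma>) (kf ?x) (snd (snd (f ?x (?z i \<sigma>, ?t i \<sigma>)))) (?t i \<sigma>)"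
      using F by (rule tpD)
    show "\<bar>fst (snd (f ?x (?z i \<sigma>, ?t i \<sigma>))) - i\<bar> \<le> int (k + K)"
      using zi zf kx by linarith
    show "eq_far i (k + K) (snd (snd (f ?x (?z i \<sigma>, ?t i \<sigma>)))) \<sigma>"
      unfolding eq_far_def
    proof (intro allI impI)
      fix m assume m: "int (k + K) < \<bar>i - m\<bar>"
      have "int (kf ?x) < \<bar>?z i \<sigma> - m\<bar>" using m zi kx by linarith
      hence 1: "snd (snd (f ?x (?z i \<sigma>, ?t i \<sigma>))) m = ?t i \<sigma> m"
        using eq_farD[OF tffar] by simp
      have "int k < \<bar>i - m\<bar>" using m by linarith
      hence "?t i \<sigma> m = \<sigma> m" by (rule eq_farD[OF tfar])
      thus "snd (snd (f ?x (?z i \<sigma>, ?t i \<sigma>))) m = \<sigma> m" using 1 by simp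
    qed
    {
      assume near: "eq_near i (k + K) \<sigma> \<sigma>'"
      have nk: "eq_near i k \<sigma> \<sigma>'" unfolding eq_near_def using eq_nearD[OF near] by simp
      have rr: "?r i \<sigma>' = ?x" and zz: "?z i \<sigma>' = ?z i \<sigma>"
        and tt: "eq_near i k (?t i \<sigma>) (?t i \<sigma>')"
        using tpD(1-3)[OF P nk] by simp_all
      have tfar': "eq_far i k (?t i \<sigma>') \<sigma>'" using P by (rule tpD)
      have tagree: "?t i \<sigma> m = ?t i \<sigma>' m" if "\<bar>i - m\<bar> \<le> int (k + K)" for m
      proof (cases "\<bar>i - m\<bar> \<le> int k")
        case True thus ?thesis by (rule eq_nearD[OF tt])
      next
        case False
        hence "?t i \<sigma> m = \<sigma> m" "?t i \<sigma>' m = \<sigma>' m"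
          using eq_farD[OF tfar] eq_farD[OF tfar'] by simp_all
        moreover have "\<sigma> m = \<sigma>' m" using eq_nearD[OF near that] .
        ultimately show ?thesis by simp
      qed
      have tnz: "eq_near (?z i \<sigma>) (kf ?x) (?t i \<sigma>) (?t i \<sigma>')"
        unfolding eq_near_def
      proof (intro allI impI)
        fix m assume "\<bar>?z i \<sigma> - m\<bar> \<le> int (kf ?x)"
        hence "\<bar>i - m\<bar> \<le> int (k + K)" using zi kx by linarith
        thus "?t i \<sigma> m = ?t i \<sigma>' m" by (rule tagree)
      qed
      have Fn: "eq_near (?z i \<sigma>) (kf ?x) (snd (snd (f ?x (?z i \<sigma>, ?t i \<sigma>)))) (snd (snd (f ?x (?z i \<sigma>, ?t i \<sigma>'))))"
        "fst (f ?x (?z i \<sigma>, ?t i \<sigma>)) = fst (f ?x (?z i \<sigma>, ?t i \<sigma>'))"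
        "fst (snd (f ?x (?z i \<sigma>, ?t i \<sigma>))) = fst (snd (f ?x (?z i \<sigma>, ?t i \<sigma>')))"
        using tpD(1-3)[OF F tnz] by simp_all
      have tffar': "eq_far (?z i \<sigma>) (kf ?x) (snd (snd (f ?x (?z i \<sigma>, ?t i \<sigma>')))) (?t i \<sigma>')"
        using F by (rule tpD)
      show "fst (f ?x (?z i \<sigma>, ?t i \<sigma>)) = fst (f (?r i \<sigma>') (?z i \<sigma>', ?t i \<sigma>'))"
        using Fn rr zz by simp
      show "fst (snd (f ?x (?z i \<sigma>, ?t i \<sigma>))) = fst (snd (f (?r i \<sigma>') (?z i \<sigma>', ?t i \<sigma>')))"
        using Fn rr zz by simp
      show "eq_near i (k + K) (snd (snd (f ?x (?z i \<sigma>, ?t i \<sigma>)))) (snd (snd (f (?r i \<sigma>') (?z i \<sigma>', ?t i \<sigma>'))))"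
        unfolding rr zz eq_near_def
      proof (intro allI impI)
        fix m assume m: "\<bar>i - m\<bar> \<le> int (k + K)"
        show "snd (snd (f ?x (?z i \<sigma>, ?t i \<sigma>))) m = snd (snd (f ?x (?z i \<sigma>, ?t i \<sigma>'))) m"
        proof (cases "\<bar>?z i \<sigma> - m\<bar> \<le> int (kf ?x)")
          case True thus ?thesis by (rule eq_nearD[OF Fn(1)])
        next
          case False
          hence "snd (snd (f ?x (?z i \<sigma>, ?t i \<sigma>))) m = ?t i \<sigma> m"
                "snd (snd (f ?x (?z i \<sigma>, ?t i \<sigma>'))) m = ?t i \<sigma>' m"
            using eq_farD[OF tffar] eq_farD[OF tffar'] by simp_all
          thus ?thesis using tagree[OF m] by simp
        qed
      qed
    }
    have S: "?t i (shift \<sigma> j) = shift (?t (i + j) \<sigma>) j"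
            "?r i (shift \<sigma> j) = ?r (i + j) \<sigma>"
            "?z i (shift \<sigma> j) = ?z (i + j) \<sigma> - j"
      using P by (rule tpD)+
    let ?y = "?r (i + j) \<sigma>"
    have F2: "tp (f ?y) (kf ?y)" by (rule hf)
    have S2: "snd (snd (f ?y (?z (i+j) \<sigma> - j, shift (?t (i+j) \<sigma>) j))) = shift (snd (snd (f ?y (?z (i+j) \<sigma> - j + j, ?t (i+j) \<sigma>)))) j"
             "fst (f ?y (?z (i+j) \<sigma> - j, shift (?t (i+j) \<sigma>) j)) = fst (f ?y (?z (i+j) \<sigma> - j + j, ?t (i+j) \<sigma>))"
             "fst (snd (f ?y (?z (i+j) \<sigma> - j, shift (?t (i+j) \<sigma>) j))) = fst (snd (f ?y (?z (i+j) \<sigma> - j + j, ?t (i+j) \<sigma>))) - j"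
      using tpD(6-8)[OF F2] by simp_all
    show "snd (snd (f (?r i (shift \<sigma> j)) (?z i (shift \<sigma> j), ?t i (shift \<sigma> j)))) =
          shift (snd (snd (f (?r (i + j) \<sigma>) (?z (i + j) \<sigma>, ?t (i + j) \<sigma>)))) j"
      using S S2 by simp
    show "fst (f (?r i (shift \<sigma> j)) (?z i (shift \<sigma> j), ?t i (shift \<sigma> j))) =
          fst (f (?r (i + j) \<sigma>) (?z (i + j) \<sigma>, ?t (i + j) \<sigma>))"
      using S S2 by simp
    show "fst (snd (f (?r i (shift \<sigma> j)) (?z i (shift \<sigma> j), ?t i (shift \<sigma> j)))) =
          fst (snd (f (?r (i + j) \<sigma>) (?z (i + j) \<sigma>, ?t (i + j) \<sigma>))) - j"
      using S S2 by simp
  qed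
  thus ?thesis by (rule exI)
qed

theorem mainTheorem15:
  fixes g_type :: "'g::finite itself"
  shows "(\<forall>x::'x. (st_eta x :: 'g store \<Rightarrow> 'x \<times> 'g store) \<in> tape_maps) \<and>
         (\<forall>(p :: 'g store \<Rightarrow> 'x \<times> 'g store) (f :: 'x \<Rightarrow> 'g store \<Rightarrow> 'y \<times> 'g store).
            p \<in> tape_maps \<longrightarrow> (\<forall>x. f x \<in> tape_maps) \<longrightarrow> st_ext f p \<in> tape_maps)"
proof (intro conjI allI impI)
  fix x :: 'x
  show "(st_eta x :: 'g store \<Rightarrow> 'x \<times> 'g store) \<in> tape_maps"
    unfolding tm_iff by (rule exI, rule eta_tp)
next
  fix p :: "'g store \<Rightarrow> 'x \<times> 'g store" and f :: "'x \<Rightarrow> 'g store \<Rightarrow> 'y \<times> 'g store"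
  assume hp: "p \<in> tape_maps" and hf: "\<forall>x. f x \<in> tape_maps"
  from hp obtain k where k: "tp p k" unfolding tm_iff by (elim exE)
  have "\<forall>x. \<exists>k. tp (f x) k" using hf unfolding tm_iff .
  then obtain kf where kf: "\<forall>x. tp (f x) (kf x)" by (rule choice[THEN exE])
  have "\<exists>K. tp (st_ext f p) K" by (rule ext_tp[OF k]) (rule kf[rule_format])
  thus "st_ext f p \<in> tape_maps" unfolding tm_iff .
qed

end
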